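(* Let $V$ be a finite set with $|V| = n$, where $n$ is prime, and let $c: V \rightarrow V$ be a cyclic permutation of $V$ (a single $n$-cycle). Then the set of nonconstant colorings $\chi: V \rightarrow \mathbb{P}$ is the disjoint union $$\biguplus_{\pi\in \mathfrak{S}_V} A(\pi, \mathrm{Des}(\pi c \pi^{-1})).$$
   Context: $\mathbb{P} = \{1,2,\ldots\}$. $\mathfrak{S}_V$ denotes the set of bijections $\pi: V \rightarrow [n]$. For $\pi \in \mathfrak{S}_V$ and $S \subseteq [n-1]$, $A(\pi,S)$ is the set of maps $\chi: V \rightarrow \mathbb{P}$ such that $\chi(\pi^{-1}(1)) \le \chi(\pi^{-1}(2)) \le \cdots \le \chi(\pi^{-1}(n))$ and $\chi(\pi^{-1}(i)) < \chi(\pi^{-1}(i+1))$ whenever $i \in S$. For a permutation $\sigma$ of $[n]$, its descent set is $\mathrm{Des}(\sigma) = \{ i \in [n-1] : \sigma(i) > \sigma(i+1)\}$; here $\pi c \pi^{-1}$ is a permutation of $[n]$. *)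

theory Defs
  imports Main "HOL-Library.FuncSet" "HOL-Combinatorics.Permutations" "HOL-Computational_Algebra.Primes"
begin

definition is_full_cycle :: "('a \<Rightarrow> 'a) \<Rightarrow> 'a set \<Rightarrow> bool" where
  "is_full_cycle c V \<longleftrightarrow> c permutes V \<and> (\<forall>x\<in>V. \<forall>y\<in>V. \<exists>k. (c ^^ k) x = y)"

definition bijs_to :: "'a set \<Rightarrow> ('a \<Rightarrow> nat) set" where
  "bijs_to V = {\<pi>. \<pi> \<in> V \<rightarrow>\<^sub>E {1..card V} \<and> bij_betw \<pi> V {1..card V}}"

definition conj_perm :: "'a set \<Rightarrow> ('a \<Rightarrow> nat) \<Rightarrow> ('a \<Rightarrow> 'a) \<Rightarrow> nat \<Rightarrow> nat" where
  "conj_perm V \<pi> c i = \<pi> (c (inv_into V \<pi> i))"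

definition Des :: "nat \<Rightarrow> (nat \<Rightarrow> nat) \<Rightarrow> nat set" where
  "Des n \<sigma> = {i \<in> {1..n-1}. \<sigma> i > \<sigma> (i+1)}"

definition colorings :: "'a set \<Rightarrow> ('a \<Rightarrow> nat) set" where
  "colorings V = V \<rightarrow>\<^sub>E {1..}"

definition A_set :: "'a set \<Rightarrow> ('a \<Rightarrow> nat) \<Rightarrow> nat set \<Rightarrow> ('a \<Rightarrow> nat) set" where
  "A_set V \<pi> S = {\<chi> \<in> colorings V.
     \<forall>i\<in>{1..card V - 1}.
       \<chi> (inv_into V \<pi> i) \<le> \<chi> (inv_into V \<pi> (i+1)) \<and>
       (i \<in> S \<longrightarrow> \<chi> (inv_into V \<pi> i) < \<chi> (inv_into V \<pi> (i+1)))}"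

end

theory Submission
  imports Defs "HOL-Library.List_Lexorder"
begin

lemma cycle_period:
  assumes fin: "finite V" and cyc: "is_full_cycle c V" and x: "x \<in> V"
  shows "(c ^^ card V) x = x"
proof -
  have perm: "c permutes V" and tr: "\<forall>x\<in>V. \<forall>y\<in>V. \<exists>k. (c ^^ k) x = y"
    using cyc by (auto simp: is_full_cycle_def)
  have "permutation c" using perm fin permutation_permutes by blast
  then obtain p0 where "p0 > 0" "(c ^^ p0) x = x" by (rule permutation_self)
  define p where "p = (LEAST p. p > 0 \<and> (c ^^ p) x = x)"
  have p: "p > 0" "(c ^^ p) x = x"
    using LeastI[of "\<lambda>p. p > 0 \<and> (c ^^ p) x = x" p0] \<open>p0 > 0\<close> \<open>(c ^^ p0) x = x\<close>
    unfolding p_def by auto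
  have pmin: "\<And>q. 0 < q \<Longrightarrow> q < p \<Longrightarrow> (c ^^ q) x \<noteq> x"
    unfolding p_def using not_less_Least by blast
  have injc: "inj c" using perm permutes_inj by blast
  have inj: "inj_on (\<lambda>m. (c ^^ m) x) {..<p}"
  proof (rule inj_onI)
    fix a b assume a: "a \<in> {..<p}" and b: "b \<in> {..<p}" and e: "(c ^^ a) x = (c ^^ b) x"
    show "a = b"
    proof (rule ccontr)
      assume "a \<noteq> b"
      then consider "a < b" | "b < a" by linarith
      then show False
      proof cases
        case 1
        have "(c ^^ a) ((c ^^ (b - a)) x) = (c ^^ (a + (b - a))) x"
          by (simp add: funpow_add)
        also have "\<dots> = (c ^^ b) x" using 1 by simp
        also have "\<dots> = (c ^^ a) x" using e by simp
        finally have "(c ^^ (b - a)) x = x" using inj_fn[OF injc] by (auto dest: injD)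
        moreover have "0 < b - a" "b - a < p" using 1 b by auto
        ultimately show False using pmin by blast
      next
        case 2
        have "(c ^^ b) ((c ^^ (a - b)) x) = (c ^^ (b + (a - b))) x"
          by (simp add: funpow_add)
        also have "\<dots> = (c ^^ a) x" using 2 by simp
        also have "\<dots> = (c ^^ b) x" using e by simp
        finally have "(c ^^ (a - b)) x = x" using inj_fn[OF injc] by (auto dest: injD)
        moreover have "0 < a - b" "a - b < p" using 2 a by auto
        ultimately show False using pmin by blast
      qed
    qed
  qed
  have "V = (\<lambda>m. (c ^^ m) x) ` {..<p}"
  proof
    show "V \<subseteq> (\<lambda>m. (c ^^ m) x) ` {..<p}"
    proof
      fix y assume "y \<in> V"
      then obtain k where "(c ^^ k) x = y" using tr x by blast
      then have "(c ^^ (k mod p)) x = y" using funpow_mod_eq[where f=c and n=p and x=x and m=k] p by simp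
      then show "y \<in> (\<lambda>m. (c ^^ m) x) ` {..<p}" using p by auto
    qed
    show "(\<lambda>m. (c ^^ m) x) ` {..<p} \<subseteq> V"
      using permutes_in_funpow_image[OF perm x] by auto
  qed
  then have "card V = p" using card_image[OF inj] by simp
  then show ?thesis using p by simp
qed

lemma periodic_mult:
  fixes f :: "nat \<Rightarrow> 'b" and k p m :: nat
  assumes "\<And>k. f (k + p) = (f k :: 'b)"
  shows "f (k + p * m) = f k"
proof (induction m)
  case 0 then show ?case by simp
next
  case (Suc m)
  have "f (k + p * Suc m) = f ((k + p * m) + p)" by (simp add: algebra_simps)
  also have "\<dots> = f k" using assms Suc by simp
  finally show ?case .
qed

lemma distinguish:
  assumes fin: "finite V" and cyc: "is_full_cycle c V" and pr: "prime (card V)"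
    and u: "u \<in> V" and w: "w \<in> V" and uw: "u \<noteq> w"
    and x: "x \<in> V" and y: "y \<in> V" and xy: "\<chi> x \<noteq> \<chi> y"
  shows "\<exists>k<card V. \<chi> ((c ^^ k) u) \<noteq> \<chi> ((c ^^ k) w)"
proof (rule ccontr)
  define n where "n = card V"
  assume "\<not> ?thesis"
  then have eqk: "\<And>k. k < n \<Longrightarrow> \<chi> ((c ^^ k) u) = \<chi> ((c ^^ k) w)" unfolding n_def by auto
  have tr: "\<forall>x\<in>V. \<forall>y\<in>V. \<exists>k. (c ^^ k) x = y" and perm: "c permutes V"
    using cyc by (auto simp: is_full_cycle_def)
  have per: "\<And>z. z \<in> V \<Longrightarrow> (c ^^ n) z = z" using cycle_period[OF fin cyc] n_def by simp
  have n0: "n > 0" using pr n_def prime_gt_0_nat by blast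
  have eqall: "\<chi> ((c ^^ k) u) = \<chi> ((c ^^ k) w)" for k
  proof -
    have "(c ^^ k) u = (c ^^ (k mod n)) u" using funpow_mod_eq[where f=c and n=n and x=u and m=k] per u by simp
    moreover have "(c ^^ k) w = (c ^^ (k mod n)) w" using funpow_mod_eq[where f=c and n=n and x=w and m=k] per w by simp
    ultimately show ?thesis using eqk[of "k mod n"] n0 by simp
  qed
  obtain j where j: "(c ^^ j) u = w" using tr u w by blast
  define j' where "j' = j mod n"
  have j': "(c ^^ j') u = w" using funpow_mod_eq[where f=c and n=n and x=u and m=j] per u j j'_def by simp
  have j'0: "j' \<noteq> 0" using j' uw by (metis funpow_0 id_apply)
  have j'n: "j' < n" using n0 j'_def by simp
  define f where "f k = \<chi> ((c ^^ k) u)" for k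
  have fj: "f (k + j') = f k" for k
  proof -
    have "(c ^^ (k + j')) u = (c ^^ k) w" using j' by (simp add: funpow_add)
    then show ?thesis using eqall[of k] f_def by simp
  qed
  have fn: "f (k + n) = f k" for k
    using per[OF u] f_def by (simp add: funpow_add)
  have "coprime n j'"
    using pr n_def j'0 j'n by (intro prime_imp_coprime) (auto dest: dvd_imp_le)
  then have g: "gcd j' n = 1" by (simp add: coprime_iff_gcd_eq_1 gcd.commute)
  obtain a b where ab: "j' * a = n * b + 1" using bezout_nat[OF j'0, of n] g by auto
  have f1: "f (Suc k) = f k" for k
  proof -
    have "f (Suc k) = f (Suc k + n * b)" by (rule periodic_mult[where f=f and p=n, OF fn, symmetric])
    also have "Suc k + n * b = k + j' * a" using ab by simp
    also have "f (k + j' * a) = f k" by (rule periodic_mult[where f=f and p=j', OF fj])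
    finally show ?thesis .
  qed
  have fc: "f k = f 0" for k
  proof (induction k)
    case 0 show ?case by simp
  next
    case (Suc k) show ?case using f1[of k] Suc by simp
  qed
  have cz: "\<chi> z = \<chi> u" if zV: "z \<in> V" for z
  proof -
    obtain k where k: "(c ^^ k) u = z" using bspec[OF bspec[OF tr u] zV] by blast
    have "f k = f 0" by (rule fc)
    then show ?thesis unfolding f_def k by simp
  qed
  have "\<chi> x = \<chi> u" "\<chi> y = \<chi> u" using cz[OF x] cz[OF y] by simp_all
  then show False using xy by simp
qed

lemma rank_lemma:
  fixes key :: "'a \<Rightarrow> 'b::linorder"
  assumes fin: "finite V" and inj: "inj_on key V"
  defines "r \<equiv> \<lambda>u. Suc (card {w\<in>V. key w < key u})"
  shows "bij_betw r V {1..card V}" and "\<And>u w. u \<in> V \<Longrightarrow> w \<in> V \<Longrightarrow> r u < r w \<longleftrightarrow> key u < key w"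
proof -
  have mono: "r u < r w" if "u \<in> V" "w \<in> V" "key u < key w" for u w
  proof -
    have "{w'\<in>V. key w' < key u} \<subset> {w'\<in>V. key w' < key w}"
      using that by auto
    then have "card {w'\<in>V. key w' < key u} < card {w'\<in>V. key w' < key w}"
      using fin by (intro psubset_card_mono) auto
    then show ?thesis unfolding r_def by simp
  qed
  show iff: "r u < r w \<longleftrightarrow> key u < key w" if "u \<in> V" "w \<in> V" for u w
  proof
    assume "r u < r w"
    show "key u < key w"
    proof (rule ccontr)
      assume "\<not> key u < key w"
      then consider "key u = key w" | "key w < key u" by fastforce
      then show False
      proof cases
        case 1 then have "u = w" using inj that by (auto dest: inj_onD)
        then show False using \<open>r u < r w\<close> by simp
      next
        case 2 then show False using mono[of w u] that \<open>r u < r w\<close> by simp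
      qed
    qed
  qed (use mono that in auto)
  have injr: "inj_on r V"
  proof (rule inj_onI)
    fix u w assume uw: "u \<in> V" "w \<in> V" "r u = r w"
    then have "\<not> key u < key w" "\<not> key w < key u" using iff[of u w] iff[of w u] by auto
    then have "key u = key w" by simp
    then show "u = w" using inj uw by (auto dest: inj_onD)
  qed
  have sub: "r ` V \<subseteq> {1..card V}"
  proof
    fix x assume "x \<in> r ` V"
    then obtain u where u: "u \<in> V" "x = r u" by auto
    have "{w\<in>V. key w < key u} \<subseteq> V - {u}" by auto
    then have "card {w\<in>V. key w < key u} \<le> card (V - {u})"
      using fin by (intro card_mono) auto
    also have "\<dots> = card V - 1" using u fin by simp
    finally have "card {w\<in>V. key w < key u} \<le> card V - 1" .
    moreover have "card V \<ge> 1" using card_gt_0_iff[of V] u fin by auto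
    ultimately show "x \<in> {1..card V}" using u unfolding r_def by auto
  qed
  have "card (r ` V) = card {1..card V}" using card_image[OF injr] by simp
  then have "r ` V = {1..card V}" using card_subset_eq[OF _ sub] by simp
  then show "bij_betw r V {1..card V}" using injr by (simp add: bij_betw_def)
qed

lemma list_less_append:
  fixes xs ys :: "'b::linorder list"
  shows "length xs = length ys \<Longrightarrow> xs < ys \<Longrightarrow> xs @ zs < ys @ ws"
proof (induction xs arbitrary: ys)
  case Nil then show ?case by simp
next
  case (Cons x xs)
  then obtain y ys' where ys: "ys = y # ys'" by (cases ys) auto
  have "length xs = length ys'" using Cons.prems ys by simp
  show ?case
  proof (cases "x < y")
    case True then show ?thesis using ys by simp
  next
    case False
    then have "x = y" "xs < ys'" using Cons.prems ys by auto
    then show ?thesis using Cons.IH[of ys'] \<open>length xs = length ys'\<close> ys by simp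
  qed
qed

lemma bijs_facts:
  assumes "\<pi> \<in> bijs_to V"
  shows "\<And>i. i \<in> {1..card V} \<Longrightarrow> inv_into V \<pi> i \<in> V \<and> \<pi> (inv_into V \<pi> i) = i"
    and "\<And>u. u \<in> V \<Longrightarrow> inv_into V \<pi> (\<pi> u) = u"
    and "inj_on \<pi> V" and "\<And>u. u \<in> V \<Longrightarrow> \<pi> u \<in> {1..card V}"
    and "\<And>u. u \<notin> V \<Longrightarrow> \<pi> u = undefined"
proof -
  have b: "bij_betw \<pi> V {1..card V}" and e: "\<pi> \<in> V \<rightarrow>\<^sub>E {1..card V}"
    using assms by (auto simp: bijs_to_def)
  show "inj_on \<pi> V" using b by (simp add: bij_betw_def)
  show "\<And>u. u \<in> V \<Longrightarrow> \<pi> u \<in> {1..card V}" using b by (auto simp: bij_betw_def)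
  show "\<And>u. u \<notin> V \<Longrightarrow> \<pi> u = undefined" using e by (auto simp: PiE_def extensional_def)
  show "\<And>u. u \<in> V \<Longrightarrow> inv_into V \<pi> (\<pi> u) = u"
    using b by (simp add: bij_betw_def inv_into_f_f)
  fix i assume "i \<in> {1..card V}"
  then have "i \<in> \<pi> ` V" using b by (simp add: bij_betw_def)
  then show "inv_into V \<pi> i \<in> V \<and> \<pi> (inv_into V \<pi> i) = i"
    by (simp add: inv_into_into f_inv_into_f)
qed

lemma local_to_global:
  assumes pi: "\<pi> \<in> bijs_to V" and perm: "c permutes V"
    and chi: "\<chi> \<in> A_set V \<pi> (Des (card V) (conj_perm V \<pi> c))"
  shows "\<forall>u\<in>V. \<forall>w\<in>V. \<pi> u < \<pi> w \<longrightarrow> \<chi> u < \<chi> w \<or> (\<chi> u = \<chi> w \<and> \<pi> (c u) < \<pi> (c w))"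
proof -
  define n where "n = card V"
  define r where "r = inv_into V \<pi>"
  have rV: "\<And>i. i \<in> {1..n} \<Longrightarrow> r i \<in> V \<and> \<pi> (r i) = i"
    using bijs_facts(1)[OF pi] unfolding r_def n_def by blast
  have rpi: "\<And>u. u \<in> V \<Longrightarrow> r (\<pi> u) = u" using bijs_facts(2)[OF pi] unfolding r_def by blast
  have injp: "inj_on \<pi> V" using bijs_facts(3)[OF pi] .
  have piV: "\<And>u. u \<in> V \<Longrightarrow> \<pi> u \<in> {1..n}" using bijs_facts(4)[OF pi] unfolding n_def by blast
  define R where "R a b \<longleftrightarrow> \<chi> (r a) < \<chi> (r b) \<or> (\<chi> (r a) = \<chi> (r b) \<and> \<pi> (c (r a)) < \<pi> (c (r b)))" for a b
  have loc: "\<forall>i\<in>{1..n - 1}. \<chi> (r i) \<le> \<chi> (r (i+1)) \<and>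
       (i \<in> Des n (conj_perm V \<pi> c) \<longrightarrow> \<chi> (r i) < \<chi> (r (i+1)))"
    using chi unfolding A_set_def r_def n_def by blast
  have Q: "R i (i+1)" if i: "1 \<le> i" "i + 1 \<le> n" for i
  proof -
    have a: "r i \<in> V" "\<pi> (r i) = i" using rV[of i] i by auto
    have b: "r (i+1) \<in> V" "\<pi> (r (i+1)) = i+1" using rV[of "i+1"] i by auto
    have ne: "r i \<noteq> r (i+1)" using a b by auto
    have cne: "c (r i) \<noteq> c (r (i+1))" using ne permutes_inj[OF perm] by (auto dest: injD)
    have cV: "c (r i) \<in> V" "c (r (i+1)) \<in> V" using a b permutes_in_image[OF perm] by auto
    have pne: "\<pi> (c (r i)) \<noteq> \<pi> (c (r (i+1)))" using cne cV injp by (auto dest: inj_onD)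
    have iin: "i \<in> {1..n-1}" using i by auto
    have l1: "\<chi> (r i) \<le> \<chi> (r (i+1))" using loc iin by blast
    have l2: "\<pi> (c (r i)) > \<pi> (c (r (i+1))) \<Longrightarrow> \<chi> (r i) < \<chi> (r (i+1))"
    proof -
      assume "\<pi> (c (r i)) > \<pi> (c (r (i+1)))"
      then have "i \<in> Des n (conj_perm V \<pi> c)" using iin unfolding Des_def conj_perm_def r_def by simp
      then show ?thesis using loc iin by blast
    qed
    show ?thesis unfolding R_def using l1 l2 pne by fastforce
  qed
  have chain: "R i (i + Suc d)" if "1 \<le> i" "i + Suc d \<le> n" for i d
    using that
  proof (induction d)
    case 0 then show ?case using Q by simp
  next
    case (Suc d)
    have h1: "R i (i + Suc d)" using Suc by simp
    have h2: "R (i + Suc d) (i + Suc d + 1)" using Q[of "i + Suc d"] Suc.prems by simp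
    show ?case using h1 h2 unfolding R_def by auto
  qed
  show ?thesis
  proof (intro ballI impI)
    fix u w assume u: "u \<in> V" and w: "w \<in> V" and lt: "\<pi> u < \<pi> w"
    define d where "d = \<pi> w - \<pi> u - 1"
    have "\<pi> w = \<pi> u + Suc d" using lt d_def by simp
    moreover have "1 \<le> \<pi> u" "\<pi> w \<le> n" using piV u w by auto
    ultimately have "R (\<pi> u) (\<pi> w)" using chain[of "\<pi> u" d] by simp
    then show "\<chi> u < \<chi> w \<or> (\<chi> u = \<chi> w \<and> \<pi> (c u) < \<pi> (c w))"
      unfolding R_def using rpi u w by simp
  qed
qed

lemma global_to_local:
  assumes pi: "\<pi> \<in> bijs_to V" and chi: "\<chi> \<in> colorings V"
    and G: "\<forall>u\<in>V. \<forall>w\<in>V. \<pi> u < \<pi> w \<longrightarrow> \<chi> u < \<chi> w \<or> (\<chi> u = \<chi> w \<and> \<pi> (c u) < \<pi> (c w))"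
  shows "\<chi> \<in> A_set V \<pi> (Des (card V) (conj_perm V \<pi> c))"
  unfolding A_set_def
proof (rule CollectI, rule conjI[OF chi], rule ballI)
  fix i assume i: "i \<in> {1..card V - 1}"
  define r where "r = inv_into V \<pi>"
  have a: "r i \<in> V" "\<pi> (r i) = i" using bijs_facts(1)[OF pi, of i] i unfolding r_def by auto
  have b: "r (i+1) \<in> V" "\<pi> (r (i+1)) = i+1" using bijs_facts(1)[OF pi, of "i+1"] i unfolding r_def by auto
  have g: "\<chi> (r i) < \<chi> (r (i+1)) \<or> (\<chi> (r i) = \<chi> (r (i+1)) \<and> \<pi> (c (r i)) < \<pi> (c (r (i+1))))"
    using G a b by auto
  show "\<chi> (inv_into V \<pi> i) \<le> \<chi> (inv_into V \<pi> (i + 1)) \<and>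
         (i \<in> Des (card V) (conj_perm V \<pi> c) \<longrightarrow> \<chi> (inv_into V \<pi> i) < \<chi> (inv_into V \<pi> (i + 1)))"
    using g unfolding r_def Des_def conj_perm_def by auto
qed

lemma ord_determined:
  fixes \<pi> \<chi> :: "'a \<Rightarrow> nat"
  assumes G: "\<forall>u\<in>V. \<forall>w\<in>V. \<pi> u < \<pi> w \<longrightarrow> \<chi> u < \<chi> w \<or> (\<chi> u = \<chi> w \<and> \<pi> (c u) < \<pi> (c w))"
    and perm: "c permutes V" and injp: "inj_on \<pi> V"
  shows "u \<in> V \<Longrightarrow> w \<in> V \<Longrightarrow> (\<forall>j<k. \<chi> ((c^^j) u) = \<chi> ((c^^j) w)) \<Longrightarrow>
    \<chi> ((c^^k) u) \<noteq> \<chi> ((c^^k) w) \<Longrightarrow> (\<pi> u < \<pi> w \<longleftrightarrow> \<chi> ((c^^k) u) < \<chi> ((c^^k) w))"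
proof (induction k arbitrary: u w)
  case 0
  then have "u \<noteq> w" by auto
  then have "\<pi> u \<noteq> \<pi> w" using injp 0 by (auto dest: inj_onD)
  then consider "\<pi> u < \<pi> w" | "\<pi> w < \<pi> u" by linarith
  then show ?case using G[rule_format, of w u] G[rule_format, of u w] 0 by cases auto
next
  case (Suc k)
  have e0: "\<chi> u = \<chi> w" using Suc.prems(3)[rule_format, of 0] by simp
  have "u \<noteq> w" using Suc.prems(4) by auto
  then have "\<pi> u \<noteq> \<pi> w" using injp Suc.prems by (auto dest: inj_onD)
  have step: "\<pi> u < \<pi> w \<longleftrightarrow> \<pi> (c u) < \<pi> (c w)"
  proof
    assume "\<pi> u < \<pi> w" then show "\<pi> (c u) < \<pi> (c w)" using G[rule_format, of u w] Suc.prems e0 by auto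
  next
    assume h: "\<pi> (c u) < \<pi> (c w)"
    show "\<pi> u < \<pi> w"
    proof (rule ccontr)
      assume "\<not> \<pi> u < \<pi> w"
      then have "\<pi> w < \<pi> u" using \<open>\<pi> u \<noteq> \<pi> w\<close> by simp
      then have "\<pi> (c w) < \<pi> (c u)" using G[rule_format, of w u] Suc.prems e0 by auto
      then show False using h by simp
    qed
  qed
  have cu: "c u \<in> V" "c w \<in> V" using Suc.prems permutes_in_image[OF perm] by auto
  have fs: "\<And>j x. (c ^^ j) (c x) = (c ^^ Suc j) x" by (simp only: funpow_Suc_right comp_apply)
  have ih: "\<pi> (c u) < \<pi> (c w) \<longleftrightarrow> \<chi> ((c^^k) (c u)) < \<chi> ((c^^k) (c w))"
  proof (rule Suc.IH[OF cu])
    show "\<forall>j<k. \<chi> ((c ^^ j) (c u)) = \<chi> ((c ^^ j) (c w))"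
      using Suc.prems(3) unfolding fs by auto
    show "\<chi> ((c ^^ k) (c u)) \<noteq> \<chi> ((c ^^ k) (c w))" using Suc.prems(4) unfolding fs .
  qed
  show ?case using step ih unfolding fs by simp
qed

lemma rank_of_bij:
  assumes pi: "\<pi> \<in> bijs_to V" and u: "u \<in> V"
  shows "\<pi> u = Suc (card {w\<in>V. \<pi> w < \<pi> u})"
proof -
  have b: "bij_betw \<pi> V {1..card V}" using pi by (simp add: bijs_to_def)
  have inj: "inj_on \<pi> {w\<in>V. \<pi> w < \<pi> u}" using b by (auto simp: bij_betw_def intro: inj_on_subset)
  have pu: "\<pi> u \<in> {1..card V}" using b u by (auto simp: bij_betw_def)
  have "\<pi> ` {w\<in>V. \<pi> w < \<pi> u} = {1..<\<pi> u}"
  proof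
    show "\<pi> ` {w\<in>V. \<pi> w < \<pi> u} \<subseteq> {1..<\<pi> u}" using b by (auto simp: bij_betw_def)
    show "{1..<\<pi> u} \<subseteq> \<pi> ` {w\<in>V. \<pi> w < \<pi> u}"
    proof
      fix i assume i: "i \<in> {1..<\<pi> u}"
      then have "i \<in> \<pi> ` V" using b pu by (auto simp: bij_betw_def)
      then obtain w where "w \<in> V" "i = \<pi> w" by auto
      then show "i \<in> \<pi> ` {w\<in>V. \<pi> w < \<pi> u}" using i by auto
    qed
  qed
  then have "card {w\<in>V. \<pi> w < \<pi> u} = \<pi> u - 1" using card_image[OF inj] by simp
  then show ?thesis using pu by simp
qed

lemma uniqueness:
  fixes \<chi> :: "'a \<Rightarrow> nat"
  assumes fin: "finite V" and cyc: "is_full_cycle c V" and pr: "prime (card V)"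
    and p1: "\<pi>1 \<in> bijs_to V" and p2: "\<pi>2 \<in> bijs_to V"
    and G1: "\<forall>u\<in>V. \<forall>w\<in>V. \<pi>1 u < \<pi>1 w \<longrightarrow> \<chi> u < \<chi> w \<or> (\<chi> u = \<chi> w \<and> \<pi>1 (c u) < \<pi>1 (c w))"
    and G2: "\<forall>u\<in>V. \<forall>w\<in>V. \<pi>2 u < \<pi>2 w \<longrightarrow> \<chi> u < \<chi> w \<or> (\<chi> u = \<chi> w \<and> \<pi>2 (c u) < \<pi>2 (c w))"
    and x: "x \<in> V" and y: "y \<in> V" and xy: "\<chi> x \<noteq> \<chi> y"
  shows "\<pi>1 = \<pi>2"
proof -
  have perm: "c permutes V" using cyc by (simp add: is_full_cycle_def)
  have same: "\<pi>1 u < \<pi>1 w \<longleftrightarrow> \<pi>2 u < \<pi>2 w" if u: "u \<in> V" and w: "w \<in> V" and uw: "u \<noteq> w" for u w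
  proof -
    define P where "P k \<longleftrightarrow> \<chi> ((c^^k) u) \<noteq> \<chi> ((c^^k) w)" for k
    have ex: "\<exists>k. P k" using distinguish[OF fin cyc pr u w uw x y xy] unfolding P_def by blast
    define k where "k = (LEAST k. P k)"
    have Pk: "P k" using LeastI_ex[OF ex] k_def by simp
    have lt: "\<forall>j<k. \<chi> ((c^^j) u) = \<chi> ((c^^j) w)"
      using not_less_Least[of _ P] unfolding k_def P_def by blast
    have "\<pi>1 u < \<pi>1 w \<longleftrightarrow> \<chi> ((c^^k) u) < \<chi> ((c^^k) w)"
      using ord_determined[OF G1 perm bijs_facts(3)[OF p1] u w lt] Pk P_def by blast
    moreover have "\<pi>2 u < \<pi>2 w \<longleftrightarrow> \<chi> ((c^^k) u) < \<chi> ((c^^k) w)"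
      using ord_determined[OF G2 perm bijs_facts(3)[OF p2] u w lt] Pk P_def by blast
    ultimately show ?thesis by simp
  qed
  show ?thesis
  proof
    fix u show "\<pi>1 u = \<pi>2 u"
    proof (cases "u \<in> V")
      case True
      have "{w\<in>V. \<pi>1 w < \<pi>1 u} = {w\<in>V. \<pi>2 w < \<pi>2 u}"
        using same True by fastforce
      then show ?thesis using rank_of_bij[OF p1 True] rank_of_bij[OF p2 True] by simp
    next
      case False
      then show ?thesis using bijs_facts(5)[OF p1] bijs_facts(5)[OF p2] by simp
    qed
  qed
qed

lemma nonconst_of_A:
  assumes fin: "finite V" and cyc: "is_full_cycle c V" and pr: "prime (card V)"
    and pi: "\<pi> \<in> bijs_to V" and chi: "\<chi> \<in> A_set V \<pi> (Des (card V) (conj_perm V \<pi> c))"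
  shows "\<exists>x\<in>V. \<exists>y\<in>V. \<chi> x \<noteq> \<chi> y"
proof (rule ccontr)
  assume "\<not> ?thesis"
  then have const: "\<And>x y. x \<in> V \<Longrightarrow> y \<in> V \<Longrightarrow> \<chi> x = \<chi> y" by blast
  have perm: "c permutes V" and tr: "\<forall>x\<in>V. \<forall>y\<in>V. \<exists>k. (c ^^ k) x = y"
    using cyc by (auto simp: is_full_cycle_def)
  have G: "\<forall>u\<in>V. \<forall>w\<in>V. \<pi> u < \<pi> w \<longrightarrow> \<chi> u < \<chi> w \<or> (\<chi> u = \<chi> w \<and> \<pi> (c u) < \<pi> (c w))"
    using local_to_global[OF pi perm chi] .
  define n where "n = card V"
  define r where "r = inv_into V \<pi>"
  have n2: "n \<ge> 2" using pr n_def prime_ge_2_nat by blast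
  have rV: "\<And>i. i \<in> {1..n} \<Longrightarrow> r i \<in> V \<and> \<pi> (r i) = i"
    using bijs_facts(1)[OF pi] unfolding r_def n_def by blast
  have piV: "\<And>u. u \<in> V \<Longrightarrow> \<pi> u \<in> {1..n}" using bijs_facts(4)[OF pi] unfolding n_def by blast
  have incr: "\<pi> (c (r i)) < \<pi> (c (r (i+1)))" if "1 \<le> i" "i + 1 \<le> n" for i
  proof -
    have h: "r i \<in> V" "\<pi> (r i) = i" "r (i+1) \<in> V" "\<pi> (r (i+1)) = i + 1"
      using rV[of i] rV[of "i+1"] that by auto
    then have "\<chi> (r i) < \<chi> (r (i+1)) \<or> (\<chi> (r i) = \<chi> (r (i+1)) \<and> \<pi> (c (r i)) < \<pi> (c (r (i+1))))"
      using G[rule_format, of "r i" "r (i+1)"] by simp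
    moreover have "\<chi> (r i) = \<chi> (r (i+1))" using const h by blast
    ultimately show ?thesis by simp
  qed
  have grow: "\<pi> (c (r 1)) + d \<le> \<pi> (c (r (1 + d)))" if "1 + d \<le> n" for d
    using that
  proof (induction d)
    case 0 then show ?case by simp
  next
    case (Suc d)
    have "\<pi> (c (r (1 + d))) < \<pi> (c (r (1 + d + 1)))" using incr[of "1+d"] Suc.prems by simp
    then show ?case using Suc by simp
  qed
  have "r n \<in> V" using rV[of n] n2 by auto
  then have "c (r n) \<in> V" using permutes_in_image[OF perm] by simp
  then have "\<pi> (c (r n)) \<le> n" using piV by auto
  moreover have "\<pi> (c (r 1)) + (n - 1) \<le> \<pi> (c (r n))" using grow[of "n - 1"] n2 by simp
  moreover have r1: "r 1 \<in> V" "\<pi> (r 1) = 1" using rV[of 1] n2 by auto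
  moreover have cr1: "c (r 1) \<in> V" using r1 permutes_in_image[OF perm] by simp
  moreover have "\<pi> (c (r 1)) \<ge> 1" using piV cr1 by auto
  ultimately have "\<pi> (c (r 1)) = \<pi> (r 1)" by simp
  then have fix1: "c (r 1) = r 1" using inj_onD[OF bijs_facts(3)[OF pi] _ cr1 r1(1)] by blast
  have fixk: "(c ^^ k) (r 1) = r 1" for k by (induction k) (use fix1 in simp_all)
  have "V \<subseteq> {r 1}"
  proof
    fix y assume "y \<in> V"
    then obtain k where "(c ^^ k) (r 1) = y" using tr r1 by blast
    then show "y \<in> {r 1}" using fixk by simp
  qed
  then have "card V \<le> 1" using card_mono[of "{r 1}" V] by simp
  then show False using n2 n_def by simp
qed

lemma existence:
  fixes \<chi> :: "'a \<Rightarrow> nat"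
  assumes fin: "finite V" and cyc: "is_full_cycle c V" and pr: "prime (card V)"
    and chi: "\<chi> \<in> colorings V" and x: "x \<in> V" and y: "y \<in> V" and xy: "\<chi> x \<noteq> \<chi> y"
  shows "\<exists>\<pi>\<in>bijs_to V. \<chi> \<in> A_set V \<pi> (Des (card V) (conj_perm V \<pi> c))"
proof -
  define n where "n = card V"
  have perm: "c permutes V" using cyc by (simp add: is_full_cycle_def)
  have n2: "n \<ge> 2" using pr n_def prime_ge_2_nat by blast
  define m where "m = n - 1"
  have nm: "n = Suc m" using n2 m_def by simp
  define key where "key u = map (\<lambda>k. \<chi> ((c^^k) u)) [0..<n]" for u
  have injk: "inj_on key V"
  proof (rule inj_onI, rule ccontr)
    fix u w assume u: "u \<in> V" and w: "w \<in> V" and e: "key u = key w" and uw: "u \<noteq> w"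
    obtain k where k: "k < n" "\<chi> ((c ^^ k) u) \<noteq> \<chi> ((c ^^ k) w)"
      using distinguish[OF fin cyc pr u w uw x y xy] n_def by blast
    have "key u ! k = key w ! k" using e by simp
    then show False using k unfolding key_def by simp
  qed
  define r where "r = (\<lambda>u. Suc (card {w\<in>V. key w < key u}))"
  have rb: "bij_betw r V {1..card V}" using rank_lemma(1)[OF fin injk] unfolding r_def .
  have ri: "\<And>u w. u \<in> V \<Longrightarrow> w \<in> V \<Longrightarrow> r u < r w \<longleftrightarrow> key u < key w"
    using rank_lemma(2)[OF fin injk] unfolding r_def by blast
  define \<pi> where "\<pi> = restrict r V"
  have pib: "\<pi> \<in> bijs_to V"
    unfolding bijs_to_def
  proof (intro CollectI conjI)
    show "\<pi> \<in> V \<rightarrow>\<^sub>E {1..card V}" using rb unfolding \<pi>_def by (auto simp: bij_betw_def)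
    show "bij_betw \<pi> V {1..card V}" using rb unfolding \<pi>_def by (subst bij_betw_cong[where g=r]) auto
  qed
  define T where "T u = map (\<lambda>k. \<chi> ((c^^Suc k) u)) [0..<m]" for u
  have k1: "key u = \<chi> u # T u" for u
    unfolding key_def T_def nm by (simp only: map_upt_Suc funpow_0 id_apply)
  have k2: "key (c u) = T u @ [\<chi> u]" if "u \<in> V" for u
  proof -
    have fs: "\<And>j. (c ^^ j) (c u) = (c ^^ Suc j) u" by (simp only: funpow_Suc_right comp_apply)
    have per: "(c ^^ Suc m) u = u" using cycle_period[OF fin cyc that] nm n_def by simp
    have "key (c u) = map (\<lambda>k. \<chi> ((c^^Suc k) u)) [0..<Suc m]" unfolding key_def nm fs ..
    also have "\<dots> = T u @ [\<chi> ((c^^Suc m) u)]" unfolding T_def by simp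
    finally show ?thesis using per by simp
  qed
  have lenT: "length (T u) = m" for u unfolding T_def by simp
  have G: "\<forall>u\<in>V. \<forall>w\<in>V. \<pi> u < \<pi> w \<longrightarrow> \<chi> u < \<chi> w \<or> (\<chi> u = \<chi> w \<and> \<pi> (c u) < \<pi> (c w))"
  proof (intro ballI impI)
    fix u w assume u: "u \<in> V" and w: "w \<in> V" and lt: "\<pi> u < \<pi> w"
    have "key u < key w" using ri[OF u w] lt u w unfolding \<pi>_def by simp
    then have "\<chi> u < \<chi> w \<or> (\<chi> u = \<chi> w \<and> T u < T w)" unfolding k1 by simp
    moreover
    have "\<pi> (c u) < \<pi> (c w)" if "\<chi> u = \<chi> w" "T u < T w"
    proof -
      have "T u @ [\<chi> u] < T w @ [\<chi> w]" by (rule list_less_append) (simp_all add: lenT that)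
      then have "key (c u) < key (c w)" using k2 u w by simp
      moreover have "c u \<in> V" "c w \<in> V" using u w permutes_in_image[OF perm] by auto
      ultimately show ?thesis using ri unfolding \<pi>_def by simp
    qed
    ultimately show "\<chi> u < \<chi> w \<or> (\<chi> u = \<chi> w \<and> \<pi> (c u) < \<pi> (c w))" by blast
  qed
  show ?thesis using global_to_local[OF pib chi G] pib by blast
qed

theorem theorem2p1:
  fixes V :: "'a set" and c :: "'a \<Rightarrow> 'a" and n :: nat
  assumes "finite V" and "card V = n" and "prime n"
    and "is_full_cycle c V"
  shows "{\<chi> \<in> colorings V. \<exists>x\<in>V. \<exists>y\<in>V. \<chi> x \<noteq> \<chi> y}
           = (\<Union>\<pi>\<in>bijs_to V. A_set V \<pi> (Des n (conj_perm V \<pi> c)))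
         \<and> disjoint_family_on (\<lambda>\<pi>. A_set V \<pi> (Des n (conj_perm V \<pi> c))) (bijs_to V)"
proof -
  have fin: "finite V" and cyc: "is_full_cycle c V" and pr: "prime (card V)"
    using assms by auto
  have perm: "c permutes V" using cyc by (simp add: is_full_cycle_def)
  have n: "n = card V" using assms by simp
  have eq: "{\<chi> \<in> colorings V. \<exists>x\<in>V. \<exists>y\<in>V. \<chi> x \<noteq> \<chi> y}
           = (\<Union>\<pi>\<in>bijs_to V. A_set V \<pi> (Des n (conj_perm V \<pi> c)))"
  proof
    show "{\<chi> \<in> colorings V. \<exists>x\<in>V. \<exists>y\<in>V. \<chi> x \<noteq> \<chi> y}
           \<subseteq> (\<Union>\<pi>\<in>bijs_to V. A_set V \<pi> (Des n (conj_perm V \<pi> c)))"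
      using existence[OF fin cyc pr] n by blast
    show "(\<Union>\<pi>\<in>bijs_to V. A_set V \<pi> (Des n (conj_perm V \<pi> c)))
           \<subseteq> {\<chi> \<in> colorings V. \<exists>x\<in>V. \<exists>y\<in>V. \<chi> x \<noteq> \<chi> y}"
    proof
      fix \<chi> assume "\<chi> \<in> (\<Union>\<pi>\<in>bijs_to V. A_set V \<pi> (Des n (conj_perm V \<pi> c)))"
      then obtain \<pi> where pi: "\<pi> \<in> bijs_to V" and chi: "\<chi> \<in> A_set V \<pi> (Des (card V) (conj_perm V \<pi> c))"
        using n by blast
      have "\<chi> \<in> colorings V" using chi unfolding A_set_def by blast
      then show "\<chi> \<in> {\<chi> \<in> colorings V. \<exists>x\<in>V. \<exists>y\<in>V. \<chi> x \<noteq> \<chi> y}"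
        using nonconst_of_A[OF fin cyc pr pi chi] by blast
    qed
  qed
  have disj: "disjoint_family_on (\<lambda>\<pi>. A_set V \<pi> (Des n (conj_perm V \<pi> c))) (bijs_to V)"
    unfolding disjoint_family_on_def
  proof (intro ballI impI)
    fix \<pi>1 \<pi>2 assume p1: "\<pi>1 \<in> bijs_to V" and p2: "\<pi>2 \<in> bijs_to V" and ne: "\<pi>1 \<noteq> \<pi>2"
    show "A_set V \<pi>1 (Des n (conj_perm V \<pi>1 c)) \<inter> A_set V \<pi>2 (Des n (conj_perm V \<pi>2 c)) = {}"
    proof (rule ccontr)
      assume "\<not> ?thesis"
      then obtain \<chi> where c1: "\<chi> \<in> A_set V \<pi>1 (Des (card V) (conj_perm V \<pi>1 c))"
        and c2: "\<chi> \<in> A_set V \<pi>2 (Des (card V) (conj_perm V \<pi>2 c))" using n by blast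
      obtain x y where xy: "x \<in> V" "y \<in> V" "\<chi> x \<noteq> \<chi> y"
        using nonconst_of_A[OF fin cyc pr p1 c1] by blast
      have "\<pi>1 = \<pi>2"
        using uniqueness[OF fin cyc pr p1 p2 local_to_global[OF p1 perm c1] local_to_global[OF p2 perm c2] xy] .
      then show False using ne by simp
    qed
  qed
  show ?thesis using eq disj by blast
qed

end
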